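(* $K_{10}$ and $K_{12}-C_{12}$ both have vertex connectivity $9$ and orientable genus $4$. $K_{14}$ and $K_{15}-6K_2$ both have vertex connectivity $13$ and orientable genus $10$. In particular, $K_{10}$ is not the unique graph with vertex connectivity 9 and genus 4, and $K_{14}$ is not the unique graph with vertex connectivity 13 and genus 10.
   Context: $K_{12}-C_{12}$ is $K_{12}$ with the edges of a Hamiltonian cycle removed. $K_{15}-6K_2$ is $K_{15}$ with the edges of a matching of size 6 removed. Genus means the minimum orientable genus of a surface in which the graph embeds. *)

theory Defs
  imports Main
begin

text \<open>Finite simple graphs: a vertex set V and a set E of 2-element subsets of V.\<close>

type_synonym 'a graph = "'a set \<times> 'a set set"

definition verts :: "'a graph \<Rightarrow> 'a set" where "verts G = fst G"
definition edges :: "'a graph \<Rightarrow> 'a set set" where "edges G = snd G"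

definition simple_graph :: "'a graph \<Rightarrow> bool" where
  "simple_graph G \<longleftrightarrow> finite (verts G) \<and>
     (\<forall>e\<in>edges G. \<exists>u v. e = {u, v} \<and> u \<noteq> v \<and> u \<in> verts G \<and> v \<in> verts G)"

definition complete_graph :: "nat \<Rightarrow> nat graph" where
  "complete_graph n = ({0..<n}, {{u, v} | u v. u < n \<and> v < n \<and> u \<noteq> v})"

definition complete_minus_ham_cycle :: "nat \<Rightarrow> nat graph" where
  "complete_minus_ham_cycle n =
     ({0..<n}, edges (complete_graph n) - {{i, (i + 1) mod n} | i. i < n})"

definition complete_minus_matching :: "nat \<Rightarrow> nat \<Rightarrow> nat graph" where
  "complete_minus_matching n m =
     ({0..<n}, edges (complete_graph n) - {{2 * i, 2 * i + 1} | i. i < m})"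

definition connected_on :: "'a set \<Rightarrow> 'a set set \<Rightarrow> bool" where
  "connected_on W E \<longleftrightarrow>
     (\<forall>u\<in>W. \<forall>v\<in>W. (\<lambda>x y. x \<in> W \<and> y \<in> W \<and> {x, y} \<in> E)\<^sup>*\<^sup>* u v)"

definition vertex_connectivity :: "'a graph \<Rightarrow> nat" where
  "vertex_connectivity G = Min {card S | S. S \<subseteq> verts G \<and>
      (\<not> connected_on (verts G - S) (edges G) \<or> card (verts G - S) \<le> 1)}"

text \<open>Orientable genus via rotation systems (Heffter--Edmonds--Ringel rotation principle).  Faces are the orbits of the face-tracing permutation
  (u,v) \<mapsto> rho (v,u).\<close>

definition darts :: "'a set set \<Rightarrow> ('a \<times> 'a) set" where
  "darts E = {(u, v). {u, v} \<in> E \<and> u \<noteq> v}"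

definition orb :: "('b \<Rightarrow> 'b) \<Rightarrow> 'b \<Rightarrow> 'b set" where
  "orb f x = {(f ^^ n) x | n. True}"

definition is_rotation_system :: "'a set set \<Rightarrow> ('a \<times> 'a \<Rightarrow> 'a \<times> 'a) \<Rightarrow> bool" where
  "is_rotation_system E \<rho> \<longleftrightarrow> bij_betw \<rho> (darts E) (darts E) \<and>
     (\<forall>d\<in>darts E. fst (\<rho> d) = fst d \<and> orb \<rho> d = {d' \<in> darts E. fst d' = fst d})"

definition face_perm :: "('a \<times> 'a \<Rightarrow> 'a \<times> 'a) \<Rightarrow> 'a \<times> 'a \<Rightarrow> 'a \<times> 'a" where
  "face_perm \<rho> = (\<lambda>(u, v). \<rho> (v, u))"

definition num_faces :: "'a set set \<Rightarrow> ('a \<times> 'a \<Rightarrow> 'a \<times> 'a) \<Rightarrow> nat" where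
  "num_faces E \<rho> = card (orb (face_perm \<rho>) ` darts E)"

text \<open>Orientable genus of a connected graph: the least g such that some rotation system
  (i.e. some cellular embedding in an orientable surface) satisfies Euler's formula
  V - E + F = 2 - 2g.\<close>
definition orientable_genus :: "'a graph \<Rightarrow> nat" where
  "orientable_genus G = (LEAST g. \<exists>\<rho>. is_rotation_system (edges G) \<rho> \<and>
      int (card (verts G)) - int (card (edges G)) + int (num_faces (edges G) \<rho>)
        = 2 - 2 * int g)"

definition graph_iso :: "'a graph \<Rightarrow> 'b graph \<Rightarrow> bool" where
  "graph_iso G H \<longleftrightarrow> (\<exists>f. bij_betw f (verts G) (verts H) \<and>
     (\<forall>u\<in>verts G. \<forall>v\<in>verts G. {u, v} \<in> edges G \<longleftrightarrow> {f u, f v} \<in> edges H))"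

end

theory Submission
  imports Defs
begin

fun nxt :: "'a \<Rightarrow> 'a list \<Rightarrow> 'a \<Rightarrow> 'a" where
  "nxt h [] v = h"
| "nxt h [a] v = h"
| "nxt h (a # b # r) v = (if a = v then b else nxt h (b # r) v)"

definition succ :: "'a list \<Rightarrow> 'a \<Rightarrow> 'a" where "succ xs v = nxt (hd xs) xs v"

definition rho :: "nat list list \<Rightarrow> nat \<times> nat \<Rightarrow> nat \<times> nat" where
  "rho rot = (\<lambda>(u, v). (u, succ (rot ! u) v))"

definition fperm :: "nat list list \<Rightarrow> nat \<times> nat \<Rightarrow> nat \<times> nat" where
  "fperm rot = (\<lambda>(u, v). (v, succ (rot ! v) u))"

definition cyc_ok :: "('b \<Rightarrow> 'b) \<Rightarrow> 'b list \<Rightarrow> bool" where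
  "cyc_ok f xs = (xs \<noteq> [] \<and> map f xs = rotate1 xs)"

definition check :: "nat \<Rightarrow> (nat \<Rightarrow> nat \<Rightarrow> bool) \<Rightarrow> nat list list \<Rightarrow> (nat \<times> nat) list list \<Rightarrow> nat list list \<Rightarrow> bool" where
 "check n ok rot fs T = (length rot = n \<and>
    (\<forall>u\<in>set [0..<n]. distinct (rot!u) \<and> 2 \<le> length (rot!u) \<and> (\<forall>v\<in>set (rot!u). v < n) \<and>
        (\<forall>v\<in>set [0..<n]. ok u v = (v \<in> set (rot!u)))) \<and>
    (\<forall>f\<in>set fs. cyc_ok (fperm rot) f) \<and>
    (\<forall>d\<in>set (concat fs). fst d < n \<and> snd d < n \<and> ok (fst d) (snd d)) \<and>
    (\<forall>(j,d)\<in>set (zip [0..<length (concat fs)] (concat fs)). T!(fst d)!(snd d) = j) \<and>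
    length (concat fs) = length (filter (\<lambda>(u,v). ok u v) (List.product [0..<n] [0..<n])))"

definition okK :: "nat \<Rightarrow> nat \<Rightarrow> bool" where "okK u v = (u \<noteq> v)"
definition okC :: "nat \<Rightarrow> nat \<Rightarrow> bool" where "okC u v = (u \<noteq> v \<and> v \<noteq> Suc u mod 12 \<and> u \<noteq> Suc v mod 12)"
definition okM :: "nat \<Rightarrow> nat \<Rightarrow> bool" where "okM u v = (u \<noteq> v \<and> \<not> (u < 12 \<and> v < 12 \<and> u div 2 = v div 2))"

lemma nxt_nth:
  "distinct xs \<Longrightarrow> i < length xs \<Longrightarrow>
     nxt h xs (xs!i) = (if Suc i < length xs then xs ! Suc i else h)"
proof (induction xs arbitrary: i)
  case Nil
  then show ?case by simp
next
  case (Cons a xs)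
  show ?case
  proof (cases xs)
    case Nil
    then show ?thesis using Cons by simp
  next
    case (Cons b r)
    show ?thesis
    proof (cases i)
      case 0
      then show ?thesis using Cons by simp
    next
      case (Suc i')
      have i': "i' < length xs" using Suc Cons.prems by simp
      have "a \<noteq> xs ! i'" using Cons.prems i' by (metis distinct.simps(2) nth_mem)
      then have "nxt h (a # xs) ((a # xs) ! i) = nxt h xs (xs ! i')"
        using Suc Cons by simp
      also have "\<dots> = (if Suc i' < length xs then xs ! Suc i' else h)"
        using Cons.IH Cons.prems i' by simp
      finally show ?thesis using Suc by simp
    qed
  qed
qed

lemma succ_nth:
  assumes "distinct xs" "i < length xs"
  shows "succ xs (xs!i) = xs ! (Suc i mod length xs)"
proof -
  have ne: "xs \<noteq> []" using assms by auto
  show ?thesis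
  proof (cases "Suc i < length xs")
    case True
    then show ?thesis using nxt_nth[OF assms] by (simp add: succ_def)
  next
    case False
    then have "Suc i = length xs" using assms by simp
    then show ?thesis using nxt_nth[OF assms, of "hd xs"] ne by (simp add: succ_def hd_conv_nth)
  qed
qed

lemma orb_cycle:
  assumes ne: "xs \<noteq> []" and step: "\<forall>j<length xs. g (xs!j) = xs ! (Suc j mod length xs)"
    and j: "j < length xs"
  shows "orb g (xs!j) = set xs"
proof -
  have pw: "(g ^^ k) (xs!j) = xs ! ((j + k) mod length xs)" for k
  proof (induction k)
    case 0
    then show ?case using j by simp
  next
    case (Suc k)
    have "(g ^^ Suc k) (xs!j) = g (xs ! ((j + k) mod length xs))" using Suc by simp
    also have "\<dots> = xs ! (Suc ((j + k) mod length xs) mod length xs)"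
      using step ne by simp
    also have "Suc ((j + k) mod length xs) mod length xs = (j + Suc k) mod length xs"
      by (simp add: mod_Suc_eq)
    finally show ?case .
  qed
  show ?thesis
  proof
    show "orb g (xs!j) \<subseteq> set xs"
      unfolding orb_def using pw ne by auto
  next
    show "set xs \<subseteq> orb g (xs!j)"
    proof
      fix x assume "x \<in> set xs"
      then obtain i where i: "i < length xs" "x = xs!i" by (auto simp: in_set_conv_nth)
      have "(j + (i + length xs - j)) mod length xs = i"
        using i j by simp
      then have "(g ^^ (i + length xs - j)) (xs!j) = x" using pw i by simp
      then show "x \<in> orb g (xs!j)" unfolding orb_def by blast
    qed
  qed
qed
lemma rho_pow: "(rho rot ^^ k) (u, v) = (u, (succ (rot!u) ^^ k) v)"
  by (induction k) (auto simp: rho_def)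

lemma succ_step:
  assumes "distinct xs"
  shows "\<forall>j<length xs. succ xs (xs!j) = xs ! (Suc j mod length xs)"
  using succ_nth[OF assms] by blast

lemma rot_sys:
  assumes D: "darts E = {(u,v). u < n \<and> v \<in> set (rot!u)}"
    and dist: "\<forall>u<n. distinct (rot!u)"
  shows "is_rotation_system E (rho rot)"
proof -
  let ?D = "darts E"
  have finD: "finite ?D"
  proof -
    have "?D \<subseteq> (\<Union>u<n. {u} \<times> set (rot!u))" using D by auto
    then show ?thesis by (rule finite_subset) auto
  qed
  have into: "rho rot ` ?D \<subseteq> ?D"
  proof
    fix x assume "x \<in> rho rot ` ?D"
    then obtain u v where uv: "(u,v) \<in> ?D" "x = rho rot (u,v)" by auto
    then have u: "u < n" and v: "v \<in> set (rot!u)" using D by auto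
    then obtain i where i: "i < length (rot!u)" "v = rot!u!i" by (auto simp: in_set_conv_nth)
    have "x = (u, rot!u ! (Suc i mod length (rot!u)))"
      using uv(2) i succ_nth[of "rot!u" i] dist u by (simp add: rho_def)
    moreover have "Suc i mod length (rot!u) < length (rot!u)"
      by (rule mod_less_divisor) (use i(1) in linarith)
    ultimately show "x \<in> ?D" using D u by auto
  qed
  have inj: "inj_on (rho rot) ?D"
  proof (rule inj_onI)
    fix x y assume x: "x \<in> ?D" and y: "y \<in> ?D" and eq: "rho rot x = rho rot y"
    obtain u v where xu: "x = (u,v)" by force
    obtain u' v' where yu: "y = (u',v')" by force
    have uu: "u = u'" using eq xu yu by (simp add: rho_def)
    have u: "u < n" and v: "v \<in> set (rot!u)" and v': "v' \<in> set (rot!u)"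
      using D x y xu yu uu by auto
    obtain i where i: "i < length (rot!u)" "v = rot!u!i" using v by (auto simp: in_set_conv_nth)
    obtain j where j: "j < length (rot!u)" "v' = rot!u!j" using v' by (auto simp: in_set_conv_nth)
    have ds: "distinct (rot!u)" using dist u by simp
    have "rot!u ! (Suc i mod length (rot!u)) = rot!u ! (Suc j mod length (rot!u))"
      using eq xu yu uu i j succ_nth[OF ds] by (simp add: rho_def)
    moreover have l: "0 < length (rot!u)" using i(1) by linarith
    ultimately have "Suc i mod length (rot!u) = Suc j mod length (rot!u)"
      using nth_eq_iff_index_eq[OF ds mod_less_divisor[OF l, of "Suc i"] mod_less_divisor[OF l, of "Suc j"]]
      by blast
    moreover have "Suc k mod length (rot!u) = (if Suc k < length (rot!u) then Suc k else 0)"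
      if "k < length (rot!u)" for k
    proof (cases "Suc k < length (rot!u)")
      case False
      then have "Suc k = length (rot!u)" using that by linarith
      then show ?thesis by simp
    qed simp
    ultimately have "i = j" using i j by (auto split: if_splits)
    then show "x = y" using xu yu uu i j by simp
  qed
  have bij: "bij_betw (rho rot) ?D ?D"
    using endo_inj_surj[OF finD into inj] inj by (simp add: bij_betw_def)
  have orbs: "orb (rho rot) d = {d' \<in> ?D. fst d' = fst d}" if d: "d \<in> ?D" for d
  proof -
    obtain u v where duv: "d = (u,v)" by force
    then have u: "u < n" and v: "v \<in> set (rot!u)" using D d by auto
    obtain i where i: "i < length (rot!u)" "v = rot!u!i" using v by (auto simp: in_set_conv_nth)
    have ds: "distinct (rot!u)" using dist u by simp
    have ne: "rot!u \<noteq> []" using i(1) by (cases "rot!u") auto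
    have o: "orb (succ (rot!u)) v = set (rot!u)"
      using orb_cycle[OF ne succ_step[OF ds] i(1)] i(2) by simp
    have "orb (rho rot) d = Pair u ` orb (succ (rot!u)) v"
      unfolding orb_def duv rho_pow by auto
    also have "\<dots> = {d' \<in> ?D. fst d' = fst d}" using o D duv u by auto
    finally show ?thesis .
  qed
  show ?thesis unfolding is_rotation_system_def
    using bij orbs by (auto simp: rho_def)
qed

lemma distinct_by_index:
  assumes "\<forall>(j,d)\<in>set (zip [0..<length xs] xs). g d = j"
  shows "distinct xs"
proof -
  have "g (xs!j) = j" if "j < length xs" for j
  proof -
    have "(j, xs!j) \<in> set (zip [0..<length xs] xs)"
      using that by (auto simp: in_set_zip intro!: exI[of _ j])
    then show ?thesis using assms by auto
  qed
  then show ?thesis by (metis distinct_conv_nth)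
qed

lemma cyc_step:
  assumes "cyc_ok g xs"
  shows "xs \<noteq> []" "\<forall>j<length xs. g (xs!j) = xs ! (Suc j mod length xs)"
proof -
  show "xs \<noteq> []" using assms by (simp add: cyc_ok_def)
  show "\<forall>j<length xs. g (xs!j) = xs ! (Suc j mod length xs)"
  proof (intro allI impI)
    fix j assume j: "j < length xs"
    have "g (xs!j) = map g xs ! j" using j by simp
    also have "\<dots> = rotate1 xs ! j" using assms by (simp add: cyc_ok_def)
    also have "\<dots> = xs ! (Suc j mod length xs)" using j by (simp add: nth_rotate1)
    finally show "g (xs!j) = xs ! (Suc j mod length xs)" .
  qed
qed

lemma faces_count:
  assumes sub: "set (concat fs) \<subseteq> D" and finD: "finite D"
    and len: "length (concat fs) = card D" and dist: "distinct (concat fs)"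
    and cyc: "\<forall>f\<in>set fs. cyc_ok g f"
  shows "card (orb g ` D) = length fs"
proof -
  have eqD: "set (concat fs) = D"
    using card_subset_eq[OF finD sub] len distinct_card[OF dist] by simp
  have orbf: "orb g x = set f" if f1: "f \<in> set fs" and f2: "x \<in> set f" for f x
  proof -
    obtain j where j: "j < length f" "x = f!j" using f2 by (auto simp: in_set_conv_nth)
    have c: "cyc_ok g f" using cyc f1 by blast
    show ?thesis using orb_cycle[OF cyc_step[OF c] j(1)] j(2) by simp
  qed
  have nonempty: "[] \<notin> set fs" using cyc by (auto simp: cyc_ok_def)
  have img: "orb g ` D = set ` set fs"
  proof
    show "orb g ` D \<subseteq> set ` set fs" using eqD orbf by auto
  next
    show "set ` set fs \<subseteq> orb g ` D"
    proof
      fix s assume "s \<in> set ` set fs"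
      then obtain f where f: "f \<in> set fs" "s = set f" by auto
      have "f \<noteq> []" using f(1) nonempty by blast
      then obtain x where "x \<in> set f" by (cases f) auto
      then show "s \<in> orb g ` D" using f orbf eqD by force
    qed
  qed
  have dc: "distinct (removeAll [] fs)"
    and disj: "\<And>ys zs. ys \<in> set fs \<Longrightarrow> zs \<in> set fs \<Longrightarrow> ys \<noteq> zs \<Longrightarrow> set ys \<inter> set zs = {}"
    using dist unfolding distinct_concat_iff by blast+
  have dfs: "distinct fs" using dc nonempty by (simp add: removeAll_id)
  have inj: "inj_on set (set fs)"
  proof (rule inj_onI)
    fix ys zs assume "ys \<in> set fs" "zs \<in> set fs" "set ys = set zs"
    then show "ys = zs" using disj nonempty by (metis inf.idem set_empty)
  qed
  show ?thesis unfolding img using card_image[OF inj] distinct_card[OF dfs] by simp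
qed
lemma darts_sym: "(u,v) \<in> darts E \<Longrightarrow> (v,u) \<in> darts E"
  unfolding darts_def by (auto simp: insert_commute)

lemma A2:
  assumes "a \<noteq> b"
  shows "{(u,v). {a,b} = {u,v} \<and> u \<noteq> v} = {(a,b),(b,a)}"
  using assms by (auto simp: doubleton_eq_iff)

lemma card_darts:
  fixes E :: "'a set set"
  assumes fin: "finite E" and dbl: "\<forall>e\<in>E. \<exists>u v. e = {u,v} \<and> u \<noteq> v"
  shows "card (darts E) = 2 * card E"
proof -
  define A :: "'a set \<Rightarrow> ('a \<times> 'a) set" where "A = (\<lambda>e. {(u,v). e = {u,v} \<and> u \<noteq> v})"
  have eq: "darts E = (\<Union>e\<in>E. A e)" unfolding darts_def A_def by blast
  have two: "card (A e) = 2" if eE: "e \<in> E" for e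
  proof -
    obtain a b where ab: "e = {a,b}" "a \<noteq> b" using bspec[OF dbl eE] by (elim exE conjE)
    have "A e = {(a,b),(b,a)}" unfolding A_def ab(1) using A2[OF ab(2)] by simp
    then show ?thesis using ab by simp
  qed
  have finA: "\<forall>e\<in>E. finite (A e)" using two by (metis card.infinite zero_neq_numeral)
  have disj: "\<forall>e\<in>E. \<forall>e'\<in>E. e \<noteq> e' \<longrightarrow> A e \<inter> A e' = {}" unfolding A_def by blast
  have "card (darts E) = (\<Sum>e\<in>E. card (A e))"
    unfolding eq by (rule card_UN_disjoint[OF fin finA disj])
  also have "\<dots> = (\<Sum>e\<in>E. 2)" using two by simp
  finally show ?thesis by simp
qed

lemma finite_darts:
  assumes fin: "finite E" and dbl: "\<forall>e\<in>E. \<exists>u v. e = {u,v} \<and> u \<noteq> v"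
  shows "finite (darts E)"
proof -
  have "darts E \<subseteq> (\<Union>E) \<times> (\<Union>E)" by (auto simp: darts_def)
  moreover have "finite (\<Union>E)" using fin dbl by (metis finite.emptyI finite.insertI finite_Union)
  ultimately show ?thesis by (meson finite_SigmaI finite_subset)
qed

lemma funpow_into:
  assumes "f ` A \<subseteq> A" "x \<in> A" shows "(f ^^ k) x \<in> A"
  using assms by (induction k) auto

lemma funpow_cancel:
  assumes into: "f ` A \<subseteq> A" and inj: "inj_on f A" and x: "x \<in> A" and y: "y \<in> A"
    and eq: "(f ^^ k) x = (f ^^ k) y"
  shows "x = y"
  using eq
proof (induction k)
  case 0 then show ?case by simp
next
  case (Suc k)
  have "(f ^^ k) x \<in> A" "(f ^^ k) y \<in> A" using funpow_into[OF into] x y by auto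
  then have "(f ^^ k) x = (f ^^ k) y" using Suc.prems inj by (simp add: inj_on_eq_iff)
  then show ?case by (rule Suc.IH)
qed

lemma orbit_period:
  assumes finA: "finite A" and into: "f ` A \<subseteq> A" and inj: "inj_on f A" and x: "x \<in> A"
  shows "\<exists>p>0. (f ^^ p) x = x"
proof -
  have "\<not> inj_on (\<lambda>k. (f ^^ k) x) (UNIV :: nat set)"
  proof
    assume "inj_on (\<lambda>k. (f ^^ k) x) (UNIV :: nat set)"
    moreover have "range (\<lambda>k. (f ^^ k) x) \<subseteq> A" using funpow_into[OF into x] by auto
    ultimately have "finite (UNIV :: nat set)"
      using finA by (meson finite_imageD finite_subset)
    then show False by simp
  qed
  then obtain i j where ij: "i \<noteq> j" "(f ^^ i) x = (f ^^ j) x" by (auto simp: inj_on_def)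
  show ?thesis
  proof (cases "i < j")
    case True
    have "(f ^^ i) ((f ^^ (j - i)) x) = (f ^^ i) x"
      using ij True by (metis funpow_add le_add_diff_inverse2 less_imp_le_nat o_apply add.commute)
    then have "(f ^^ (j - i)) x = x"
      using funpow_cancel[OF into inj funpow_into[OF into x] x] by blast
    then show ?thesis using True by (intro exI[of _ "j - i"]) simp
  next
    case False
    then have T: "j < i" using ij by simp
    have "(f ^^ j) ((f ^^ (i - j)) x) = (f ^^ j) x"
      using ij T by (metis funpow_add le_add_diff_inverse2 less_imp_le_nat o_apply add.commute)
    then have "(f ^^ (i - j)) x = x"
      using funpow_cancel[OF into inj funpow_into[OF into x] x] by blast
    then show ?thesis using T by (intro exI[of _ "i - j"]) simp
  qed
qed

lemma funpow_mult_period: "(f ^^ p) x = x \<Longrightarrow> (f ^^ (m * p)) x = x"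
  by (induction m) (auto simp: funpow_add)

lemma orb_sym:
  assumes finA: "finite A" and into: "f ` A \<subseteq> A" and inj: "inj_on f A" and x: "x \<in> A"
    and y: "y \<in> orb f x"
  shows "x \<in> orb f y"
proof -
  obtain k where k: "y = (f ^^ k) x" using y unfolding orb_def by auto
  obtain p where p: "p > 0" "(f ^^ p) x = x" using orbit_period[OF finA into inj x] by auto
  have kp: "k \<le> k * p" using p(1) by simp
  have "(f ^^ (k * p - k)) y = (f ^^ (k * p - k + k)) x" using k by (simp add: funpow_add)
  also have "\<dots> = (f ^^ (k * p)) x" using kp by simp
  also have "\<dots> = x" using funpow_mult_period[OF p(2)] by simp
  finally show ?thesis unfolding orb_def by blast
qed

lemma orb_trans: "y \<in> orb f x \<Longrightarrow> orb f y \<subseteq> orb f x"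
  unfolding orb_def by (auto simp flip: funpow_add) (metis funpow_add o_apply)

lemma faces_bound:
  assumes fin: "finite E" and dbl: "\<forall>e\<in>E. \<exists>u v. e = {u,v} \<and> u \<noteq> v"
    and deg: "\<forall>d\<in>darts E. \<exists>w. w \<noteq> snd d \<and> (fst d, w) \<in> darts E"
    and rs: "is_rotation_system E \<rho>"
  shows "3 * num_faces E \<rho> \<le> card (darts E)"
proof -
  let ?D = "darts E"
  let ?F = "face_perm \<rho>"
  have finD: "finite ?D" by (rule finite_darts[OF fin dbl])
  have bij: "bij_betw \<rho> ?D ?D" and fstr: "\<And>d. d \<in> ?D \<Longrightarrow> fst (\<rho> d) = fst d"
    and orbr: "\<And>d. d \<in> ?D \<Longrightarrow> orb \<rho> d = {d' \<in> ?D. fst d' = fst d}"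
    using rs unfolding is_rotation_system_def by auto
  have injr: "inj_on \<rho> ?D" using bij by (rule bij_betw_imp_inj_on)
  have rin: "\<rho> d \<in> ?D" if "d \<in> ?D" for d using bij_betwE[OF bij] that by blast
  have Fapp: "?F (u,v) = \<rho> (v,u)" for u v by (simp add: face_perm_def)
  have Fin: "?F x \<in> ?D" if x: "x \<in> ?D" for x
  proof -
    obtain u v where xu: "x = (u,v)" by force
    have "(v,u) \<in> ?D" using x xu darts_sym by simp
    then show ?thesis using rin xu Fapp by simp
  qed
  have into: "?F ` ?D \<subseteq> ?D" using Fin by blast
  have inj: "inj_on ?F ?D"
  proof (rule inj_onI)
    fix x y assume x: "x \<in> ?D" and y: "y \<in> ?D" and eq: "?F x = ?F y"
    obtain u v where xu: "x = (u,v)" by force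
    obtain u' v' where yu: "y = (u',v')" by force
    have a: "(v,u) \<in> ?D" using x xu darts_sym by simp
    have b: "(v',u') \<in> ?D" using y yu darts_sym by simp
    have "\<rho> (v,u) = \<rho> (v',u')" using eq xu yu Fapp by simp
    then have "(v,u) = (v',u')" using inj_onD[OF injr _ a b] by blast
    then show "x = y" using xu yu by simp
  qed
  let ?O = "orb ?F ` ?D"
  have osub: "orb ?F x \<subseteq> ?D" if "x \<in> ?D" for x
    using funpow_into[OF into that] unfolding orb_def by auto
  have pw_in: "(?F ^^ k) x \<in> orb ?F x" for k x unfolding orb_def by blast
  have xin: "x \<in> orb ?F x" for x using pw_in[of 0 x] by simp
  have union: "\<Union>?O = ?D" using osub xin by blast
  have disj: "pairwise disjnt ?O"
  proof (rule pairwiseI)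
    fix a b assume a: "a \<in> ?O" and b: "b \<in> ?O" and ab: "a \<noteq> b"
    obtain x where x: "x \<in> ?D" "a = orb ?F x" using a by auto
    obtain y where y: "y \<in> ?D" "b = orb ?F y" using b by auto
    show "disjnt a b"
    proof (rule ccontr)
      assume "\<not> disjnt a b"
      then obtain z where z: "z \<in> orb ?F x" "z \<in> orb ?F y" using x y by (auto simp: disjnt_def)
      have "orb ?F z = orb ?F x"
        using orb_trans[OF z(1)] orb_trans[OF orb_sym[OF finD into inj x(1) z(1)]] by blast
      moreover have "orb ?F z = orb ?F y"
        using orb_trans[OF z(2)] orb_trans[OF orb_sym[OF finD into inj y(1) z(2)]] by blast
      ultimately show False using ab x y by simp
    qed
  qed
  have big: "3 \<le> card (orb ?F x)" if x: "x \<in> ?D" for x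
  proof -
    obtain u v where xu: "x = (u,v)" by force
    have uv: "u \<noteq> v" using x xu by (simp add: darts_def)
    have vu: "(v,u) \<in> ?D" using x xu darts_sym by simp
    define w where "w = snd (\<rho> (v,u))"
    have w: "?F x = (v,w)" using fstr[OF vu] unfolding w_def xu Fapp by (simp add: prod_eq_iff)
    have Fx: "?F x \<in> ?D" using Fin x by blast
    then have vw: "v \<noteq> w" using w by (simp add: darts_def)
    have wv: "(w,v) \<in> ?D" using Fx w darts_sym by simp
    define z where "z = snd (\<rho> (w,v))"
    have z: "?F (?F x) = (w,z)" using fstr[OF wv] unfolding w z_def Fapp by (simp add: prod_eq_iff)
    have d1: "?F x \<noteq> x" using w xu uv by simp
    have d2: "?F (?F x) \<noteq> ?F x" using w z vw by simp
    have d3: "?F (?F x) \<noteq> x"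
    proof
      assume h: "?F (?F x) = x"
      then have wu: "w = u" using z xu by simp
      then have fix1: "\<rho> (v,u) = (v,u)" using w xu Fapp by simp
      have pk: "(\<rho> ^^ k) (v,u) = (v,u)" for k
      proof (induction k)
        case 0 show ?case by simp
      next
        case (Suc k) then show ?case using fix1 by simp
      qed
      have o1: "orb \<rho> (v,u) = {(v,u)}" unfolding orb_def using pk by auto
      obtain w' where w': "w' \<noteq> u" "(v,w') \<in> ?D" using bspec[OF deg vu] by auto
      have "(v,w') \<in> orb \<rho> (v,u)" using orbr[OF vu] w' by simp
      then show False using o1 w'(1) by simp
    qed
    have s1: "?F x \<in> orb ?F x" using pw_in[of 1 x] by simp
    have s2: "?F (?F x) \<in> orb ?F x" using pw_in[of 2 x] by (simp add: numeral_2_eq_2)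
    have "{x, ?F x, ?F (?F x)} \<subseteq> orb ?F x" using xin s1 s2 by blast
    moreover have "card {x, ?F x, ?F (?F x)} = 3" using d1 d2 d3 by auto
    moreover have "finite (orb ?F x)" using osub[OF x] finD finite_subset by blast
    ultimately show ?thesis by (metis card_mono)
  qed
  have finO: "\<And>a. a \<in> ?O \<Longrightarrow> finite a" using osub finD finite_subset by blast
  have "card ?D = sum card ?O" using card_Union_disjoint[OF disj finO] union by simp
  also have "\<dots> \<ge> sum (\<lambda>_. 3) ?O" using big by (intro sum_mono) auto
  finally have "card ?D \<ge> 3 * card ?O" by simp
  then show ?thesis unfolding num_faces_def by simp
qed
lemma check_sound:
  assumes chk: "check n ok rot fs T" and D: "darts E = {(u,v). u < n \<and> v < n \<and> ok u v}"
  shows "is_rotation_system E (rho rot)" and "num_faces E (rho rot) = length fs"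
    and "card (darts E) = length (concat fs)"
    and "\<forall>d\<in>darts E. \<exists>w. w \<noteq> snd d \<and> (fst d, w) \<in> darts E"
proof -
  have c1: "\<And>u. u < n \<Longrightarrow> distinct (rot!u) \<and> 2 \<le> length (rot!u) \<and> (\<forall>v\<in>set (rot!u). v < n) \<and>
        (\<forall>v<n. ok u v = (v \<in> set (rot!u)))"
    using chk unfolding check_def by auto
  have c2: "\<forall>f\<in>set fs. cyc_ok (fperm rot) f" using chk unfolding check_def by auto
  have c3: "\<forall>d\<in>set (concat fs). fst d < n \<and> snd d < n \<and> ok (fst d) (snd d)"
    using chk unfolding check_def by blast
  have c4: "\<forall>(j,d)\<in>set (zip [0..<length (concat fs)] (concat fs)). (\<lambda>d. T!(fst d)!(snd d)) d = j"
    using chk unfolding check_def by simp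
  have c5: "length (concat fs) = length (filter (\<lambda>(u,v). ok u v) (List.product [0..<n] [0..<n]))"
    using chk unfolding check_def by blast
  have D': "darts E = {(u,v). u < n \<and> v \<in> set (rot!u)}"
    unfolding D using c1 by auto
  show rs: "is_rotation_system E (rho rot)"
    by (rule rot_sys[OF D']) (use c1 in blast)
  have Dl: "darts E = set (filter (\<lambda>(u,v). ok u v) (List.product [0..<n] [0..<n]))"
    unfolding D by auto
  have dl: "distinct (filter (\<lambda>(u,v). ok u v) (List.product [0..<n] [0..<n]))"
    by (intro distinct_filter distinct_product) auto
  have cardD: "card (darts E) = length (concat fs)"
    unfolding Dl distinct_card[OF dl] c5 ..
  then show "card (darts E) = length (concat fs)" .
  have finD: "finite (darts E)" unfolding Dl by simp
  have fp: "face_perm (rho rot) = fperm rot"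
    by (rule ext) (auto simp: face_perm_def rho_def fperm_def)
  have sub: "set (concat fs) \<subseteq> darts E"
  proof
    fix d assume "d \<in> set (concat fs)"
    then have "fst d < n \<and> snd d < n \<and> ok (fst d) (snd d)" using c3 by blast
    then show "d \<in> darts E" unfolding D by (cases d) simp
  qed
  have dist: "distinct (concat fs)" by (rule distinct_by_index[OF c4])
  show "num_faces E (rho rot) = length fs"
    unfolding num_faces_def fp
    by (rule faces_count[OF sub finD cardD[symmetric] dist c2])
  show "\<forall>d\<in>darts E. \<exists>w. w \<noteq> snd d \<and> (fst d, w) \<in> darts E"
  proof
    fix d assume d: "d \<in> darts E"
    obtain u v where duv: "d = (u,v)" by force
    have u: "u < n" using d duv D' by auto
    have l: "2 \<le> length (rot!u)" and ds: "distinct (rot!u)" using c1[OF u] by auto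
    have ne: "rot!u!0 \<noteq> rot!u!1" using nth_eq_iff_index_eq[OF ds, of 0 1] l by (simp del: length_greater_0_conv)
    have m0: "rot!u!0 \<in> set (rot!u)" and m1: "rot!u!1 \<in> set (rot!u)"
      using nth_mem[of 0 "rot!u"] nth_mem[of 1 "rot!u"] l by linarith+
    show "\<exists>w. w \<noteq> snd d \<and> (fst d, w) \<in> darts E"
    proof (cases "rot!u!0 = v")
      case True
      then show ?thesis using ne m1 u duv D' by (intro exI[of _ "rot!u!1"]) auto
    next
      case False
      then show ?thesis using m0 u duv D' by (intro exI[of _ "rot!u!0"]) auto
    qed
  qed
qed

lemma genus_eq:
  fixes G :: "nat graph"
  assumes fin: "finite (edges G)" and dbl: "\<forall>e\<in>edges G. \<exists>u v. e = {u,v} \<and> u \<noteq> v"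
    and deg: "\<forall>d\<in>darts (edges G). \<exists>w. w \<noteq> snd d \<and> (fst d, w) \<in> darts (edges G)"
    and rs: "is_rotation_system (edges G) \<rho>"
    and eul: "int (card (verts G)) - int (card (edges G)) + int (num_faces (edges G) \<rho>) = 2 - 2 * int g"
    and tight: "3 * int (card (verts G)) - int (card (edges G)) < 12 - 6 * int g"
  shows "orientable_genus G = g"
  unfolding orientable_genus_def
proof (rule Least_equality)
  show "\<exists>\<rho>. is_rotation_system (edges G) \<rho> \<and>
      int (card (verts G)) - int (card (edges G)) + int (num_faces (edges G) \<rho>) = 2 - 2 * int g"
    using rs eul by blast
next
  fix y assume "\<exists>\<rho>. is_rotation_system (edges G) \<rho> \<and>
      int (card (verts G)) - int (card (edges G)) + int (num_faces (edges G) \<rho>) = 2 - 2 * int y"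
  then obtain \<rho>' where rs': "is_rotation_system (edges G) \<rho>'"
    and eul': "int (card (verts G)) - int (card (edges G)) + int (num_faces (edges G) \<rho>') = 2 - 2 * int y"
    by blast
  have "3 * num_faces (edges G) \<rho>' \<le> card (darts (edges G))"
    by (rule faces_bound[OF fin dbl deg rs'])
  then have "3 * num_faces (edges G) \<rho>' \<le> 2 * card (edges G)"
    using card_darts[OF fin dbl] by simp
  then have "3 * int (num_faces (edges G) \<rho>') \<le> 2 * int (card (edges G))" by linarith
  then show "g \<le> y" using eul' tight by linarith
qed

lemma genus_from_check:
  fixes G :: "nat graph"
  assumes chk: "check n ok rot fs T" and D: "darts (edges G) = {(u,v). u < n \<and> v < n \<and> ok u v}"
    and fin: "finite (edges G)" and dbl: "\<forall>e\<in>edges G. \<exists>u v. e = {u,v} \<and> u \<noteq> v"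
    and V: "card (verts G) = n"
    and eul: "int n - int (length (concat fs) div 2) + int (length fs) = 2 - 2 * int g"
    and tight: "3 * int n - int (length (concat fs) div 2) < 12 - 6 * int g"
  shows "orientable_genus G = g"
proof -
  note cs = check_sound[OF chk D]
  have cE: "card (edges G) = length (concat fs) div 2"
    using card_darts[OF fin dbl] cs(3) by simp
  show ?thesis
    by (rule genus_eq[OF fin dbl cs(4) cs(1)]) (use eul tight cs(2) cE V in simp_all)
qed

lemma edge_iff:
  assumes D: "darts E = {(u,v). u < n \<and> v < n \<and> ok u v}"
    and dbl: "\<forall>e\<in>E. \<exists>u v. e = {u,v} \<and> u \<noteq> v" and irr: "\<And>u. \<not> ok u u"
  shows "{x,y} \<in> E \<longleftrightarrow> x < n \<and> y < n \<and> ok x y"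
proof (cases "x = y")
  case True
  have "{x} \<notin> E"
  proof
    assume "{x} \<in> E"
    then obtain u v where "{x} = {u,v}" "u \<noteq> v" using dbl by blast
    then show False by (metis doubleton_eq_iff insert_absorb2)
  qed
  then show ?thesis using True irr by simp
next
  case False
  have "(x,y) \<in> darts E \<longleftrightarrow> {x,y} \<in> E" using False by (simp add: darts_def)
  then show ?thesis using D by auto
qed

lemma not_iso:
  assumes "card (verts G) \<noteq> card (verts H)"
  shows "\<not> graph_iso G H"
  using assms unfolding graph_iso_def by (metis bij_betw_same_card)

lemma vc_eq:
  fixes G :: "'a graph"
  assumes fin: "finite (verts G)" and S0: "S0 \<subseteq> verts G"
    and bad: "\<not> connected_on (verts G - S0) (edges G) \<or> card (verts G - S0) \<le> 1"
    and good: "\<And>S. S \<subseteq> verts G \<Longrightarrow> card S < card S0 \<Longrightarrow>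
        connected_on (verts G - S) (edges G) \<and> \<not> card (verts G - S) \<le> 1"
  shows "vertex_connectivity G = card S0"
  unfolding vertex_connectivity_def
proof (rule Min_eqI)
  have "{card S |S. S \<subseteq> verts G \<and> (\<not> connected_on (verts G - S) (edges G) \<or> card (verts G - S) \<le> 1)}
        \<subseteq> card ` Pow (verts G)" by auto
  then show "finite {card S |S. S \<subseteq> verts G \<and> (\<not> connected_on (verts G - S) (edges G) \<or> card (verts G - S) \<le> 1)}"
    using fin by (meson finite_Pow_iff finite_imageI finite_subset)
next
  fix y assume "y \<in> {card S |S. S \<subseteq> verts G \<and> (\<not> connected_on (verts G - S) (edges G) \<or> card (verts G - S) \<le> 1)}"
  then obtain S where S: "y = card S" "S \<subseteq> verts G" "\<not> connected_on (verts G - S) (edges G) \<or> card (verts G - S) \<le> 1"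
    by blast
  show "card S0 \<le> y"
  proof (rule ccontr)
    assume "\<not> card S0 \<le> y"
    then have "card S < card S0" using S by simp
    then show False using good[OF S(2)] S(3) by blast
  qed
next
  show "card S0 \<in> {card S |S. S \<subseteq> verts G \<and> (\<not> connected_on (verts G - S) (edges G) \<or> card (verts G - S) \<le> 1)}"
    using S0 bad by blast
qed

lemma conn_intro:
  assumes "\<And>u v. u \<in> W \<Longrightarrow> v \<in> W \<Longrightarrow> u \<noteq> v \<Longrightarrow> (\<lambda>x y. x \<in> W \<and> y \<in> W \<and> {x, y} \<in> E)\<^sup>*\<^sup>* u v"
  shows "connected_on W E"
  unfolding connected_on_def
proof (intro ballI)
  fix u v assume "u \<in> W" "v \<in> W"
  then show "(\<lambda>x y. x \<in> W \<and> y \<in> W \<and> {x, y} \<in> E)\<^sup>*\<^sup>* u v"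
    using assms by (cases "u = v") auto
qed

lemma not_reach:
  assumes "\<And>y. \<not> R a y" "a \<noteq> b"
  shows "\<not> R\<^sup>*\<^sup>* a b"
  using assms by (metis converse_rtranclpE)

lemma rtranclp_sym:
  assumes sym: "\<And>x y. R x y \<Longrightarrow> R y x" and r: "R\<^sup>*\<^sup>* a b"
  shows "R\<^sup>*\<^sup>* b a"
  using r
proof (induction rule: rtranclp_induct)
  case base then show ?case by simp
next
  case (step y z)
  then show ?case using sym by (metis converse_rtranclp_into_rtranclp)
qed

lemma path2:
  assumes "R a b" "R b c" shows "R\<^sup>*\<^sup>* a c"
  using assms by (metis r_into_rtranclp rtranclp.rtrancl_into_rtrancl)

lemma path3:
  assumes "R a b" "R b c" "R c d" shows "R\<^sup>*\<^sup>* a d"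
  using assms by (metis path2 rtranclp.rtrancl_into_rtrancl)
lemma complete_edges_iff: "{x,y} \<in> edges (complete_graph n) \<longleftrightarrow> x < n \<and> y < n \<and> x \<noteq> y"
proof
  assume "{x,y} \<in> edges (complete_graph n)"
  then obtain u v where uv: "{x,y} = {u,v}" "u < n" "v < n" "u \<noteq> v"
    by (auto simp: complete_graph_def edges_def)
  then have "(x = u \<and> y = v) \<or> (x = v \<and> y = u)" by (simp add: doubleton_eq_iff)
  then show "x < n \<and> y < n \<and> x \<noteq> y" using uv by auto
next
  assume "x < n \<and> y < n \<and> x \<noteq> y"
  then show "{x,y} \<in> edges (complete_graph n)"
    unfolding complete_graph_def edges_def by auto
qed

lemma complete_dbl: "\<forall>e\<in>edges (complete_graph n). \<exists>u v. e = {u,v} \<and> u \<noteq> v"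
  by (auto simp: complete_graph_def edges_def)

lemma complete_fin: "finite (edges (complete_graph n))"
proof -
  have "edges (complete_graph n) \<subseteq> Pow {0..<n}" by (auto simp: complete_graph_def edges_def)
  then show ?thesis by (rule finite_subset) simp
qed

lemma verts_complete: "verts (complete_graph n) = {0..<n}"
  by (simp add: complete_graph_def verts_def)

lemma C_edges: "edges (complete_minus_ham_cycle n) = edges (complete_graph n) - {{i, (i + 1) mod n} | i. i < n}"
  by (simp add: complete_minus_ham_cycle_def edges_def)

lemma C_verts: "verts (complete_minus_ham_cycle n) = {0..<n}"
  by (simp add: complete_minus_ham_cycle_def verts_def)

lemma M_edges: "edges (complete_minus_matching n m) = edges (complete_graph n) - {{2 * i, 2 * i + 1} | i. i < m}"
  by (simp add: complete_minus_matching_def edges_def)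

lemma M_verts: "verts (complete_minus_matching n m) = {0..<n}"
  by (simp add: complete_minus_matching_def verts_def)

lemma Rmem:
  assumes "u \<noteq> v"
  shows "{u,v} \<in> {{i, (i + 1) mod n} | i. i < n} \<longleftrightarrow> (u < n \<and> v = Suc u mod n) \<or> (v < n \<and> u = Suc v mod n)"
proof
  assume "{u,v} \<in> {{i, (i + 1) mod n} | i. i < n}"
  then obtain i where i: "{u,v} = {i, (i + 1) mod n}" "i < n" by blast
  then have "(u = i \<and> v = (i + 1) mod n) \<or> (u = (i + 1) mod n \<and> v = i)" by (simp add: doubleton_eq_iff)
  then show "(u < n \<and> v = Suc u mod n) \<or> (v < n \<and> u = Suc v mod n)" using i(2) by auto
next
  assume "(u < n \<and> v = Suc u mod n) \<or> (v < n \<and> u = Suc v mod n)"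
  then show "{u,v} \<in> {{i, (i + 1) mod n} | i. i < n}"
  proof
    assume h: "u < n \<and> v = Suc u mod n"
    then have "{u,v} = {u, (u + 1) mod n}" by simp
    then show ?thesis using h by blast
  next
    assume h: "v < n \<and> u = Suc v mod n"
    then have "{u,v} = {v, (v + 1) mod n}" by (simp add: insert_commute)
    then show ?thesis using h by blast
  qed
qed

lemma Mmem:
  fixes u v :: nat
  assumes "u \<noteq> v"
  shows "{u,v} \<in> {{2 * i, 2 * i + 1} | i. i < 6} \<longleftrightarrow> (u < 12 \<and> v < 12 \<and> u div 2 = v div 2)"
proof
  assume "{u,v} \<in> {{2 * i, 2 * i + 1} | i. i < 6}"
  then obtain i where i: "{u,v} = {2 * i, 2 * i + 1}" "i < 6" by blast
  then have "(u = 2 * i \<and> v = 2 * i + 1) \<or> (u = 2 * i + 1 \<and> v = 2 * i)" by (simp add: doubleton_eq_iff)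
  then show "u < 12 \<and> v < 12 \<and> u div 2 = v div 2" using i(2) by auto
next
  assume h: "u < 12 \<and> v < 12 \<and> u div 2 = v div 2"
  then have "(u = 2 * (u div 2) \<and> v = 2 * (u div 2) + 1) \<or> (u = 2 * (u div 2) + 1 \<and> v = 2 * (u div 2))"
    using assms by presburger
  then have "{u,v} = {2 * (u div 2), 2 * (u div 2) + 1}" by (auto simp: insert_commute)
  moreover have "u div 2 < 6" using h by presburger
  ultimately show "{u,v} \<in> {{2 * i, 2 * i + 1} | i. i < 6}" by blast
qed

lemma darts_K: "darts (edges (complete_graph n)) = {(u,v). u < n \<and> v < n \<and> okK u v}"
  unfolding darts_def okK_def using complete_edges_iff by auto

lemma darts_C: "darts (edges (complete_minus_ham_cycle 12)) = {(u,v). u < 12 \<and> v < 12 \<and> okC u v}"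
proof -
  have "(u,v) \<in> darts (edges (complete_minus_ham_cycle 12)) \<longleftrightarrow> u < 12 \<and> v < 12 \<and> okC u v" for u v
  proof (cases "u = v")
    case True then show ?thesis by (simp add: darts_def okC_def)
  next
    case False
    then show ?thesis unfolding darts_def C_edges okC_def
      using Rmem[OF False, of 12] complete_edges_iff[of u v 12] by auto
  qed
  then show ?thesis by auto
qed

lemma darts_M: "darts (edges (complete_minus_matching 15 6)) = {(u,v). u < 15 \<and> v < 15 \<and> okM u v}"
proof -
  have "(u,v) \<in> darts (edges (complete_minus_matching 15 6)) \<longleftrightarrow> u < 15 \<and> v < 15 \<and> okM u v" for u v
  proof (cases "u = v")
    case True then show ?thesis by (simp add: darts_def okM_def)
  next
    case False
    then show ?thesis unfolding darts_def M_edges okM_def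
      using Mmem[OF False] complete_edges_iff[of u v 15] by auto
  qed
  then show ?thesis by auto
qed

lemma C_dbl: "\<forall>e\<in>edges (complete_minus_ham_cycle 12). \<exists>u v. e = {u,v} \<and> u \<noteq> v"
  using complete_dbl unfolding C_edges by blast
lemma C_fin: "finite (edges (complete_minus_ham_cycle 12))"
  unfolding C_edges using complete_fin by blast
lemma M_dbl: "\<forall>e\<in>edges (complete_minus_matching 15 6). \<exists>u v. e = {u,v} \<and> u \<noteq> v"
  using complete_dbl unfolding M_edges by blast
lemma M_fin: "finite (edges (complete_minus_matching 15 6))"
  unfolding M_edges using complete_fin by blast
lemma card_W:
  assumes "S \<subseteq> {0..<(n::nat)}"
  shows "card ({0..<n} - S) = n - card S"
  using assms by (simp add: card_Diff_subset finite_subset)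

lemma vcK:
  assumes n: "2 \<le> n"
  shows "vertex_connectivity (complete_graph n) = n - 1"
proof -
  have c: "card {0..<n-1} = n - 1" by simp
  have "vertex_connectivity (complete_graph n) = card {0..<n-1}"
  proof (rule vc_eq)
    show "finite (verts (complete_graph n))" by (simp add: verts_complete)
    show "{0..<n-1} \<subseteq> verts (complete_graph n)" by (auto simp: verts_complete)
    have "verts (complete_graph n) - {0..<n-1} = {n-1}" using n by (auto simp: verts_complete)
    then show "\<not> connected_on (verts (complete_graph n) - {0..<n-1}) (edges (complete_graph n)) \<or>
       card (verts (complete_graph n) - {0..<n-1}) \<le> 1" by simp
  next
    fix S assume S: "S \<subseteq> verts (complete_graph n)" "card S < card {0..<n-1}"
    have "card (verts (complete_graph n) - S) = n - card S"
      using S(1) card_W by (simp add: verts_complete)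
    then have cw: "\<not> card (verts (complete_graph n) - S) \<le> 1" using S(2) c by linarith
    have "connected_on (verts (complete_graph n) - S) (edges (complete_graph n))"
    proof (rule conn_intro)
      fix u v assume uv: "u \<in> verts (complete_graph n) - S" "v \<in> verts (complete_graph n) - S" "u \<noteq> v"
      then have "{u,v} \<in> edges (complete_graph n)" by (simp add: complete_edges_iff verts_complete)
      then show "(\<lambda>x y. x \<in> verts (complete_graph n) - S \<and> y \<in> verts (complete_graph n) - S \<and>
          {x, y} \<in> edges (complete_graph n))\<^sup>*\<^sup>* u v"
        using uv by (intro r_into_rtranclp) simp
    qed
    then show "connected_on (verts (complete_graph n) - S) (edges (complete_graph n)) \<and>
      \<not> card (verts (complete_graph n) - S) \<le> 1" using cw by simp
  qed
  then show ?thesis using c by simp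
qed

lemma edgeM: "{x,y} \<in> edges (complete_minus_matching 15 6) \<longleftrightarrow> x < 15 \<and> y < 15 \<and> okM x y"
  by (rule edge_iff[OF darts_M M_dbl]) (simp add: okM_def)

lemma edgeC: "{x,y} \<in> edges (complete_minus_ham_cycle 12) \<longleftrightarrow> x < 12 \<and> y < 12 \<and> okC x y"
  by (rule edge_iff[OF darts_C C_dbl]) (simp add: okC_def)

lemma three_div2:
  fixes a b c :: nat
  assumes "a div 2 = b div 2" "b div 2 = c div 2" "a \<noteq> b" "a \<noteq> c" "b \<noteq> c"
  shows False
proof -
  have a: "a = 2 * (a div 2) + a mod 2" and b: "b = 2 * (b div 2) + b mod 2" and c: "c = 2 * (c div 2) + c mod 2"
    by simp_all
  have "a mod 2 < 2" "b mod 2 < 2" "c mod 2 < 2" by simp_all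
  then show False using a b c assms by linarith
qed

lemma vcM: "vertex_connectivity (complete_minus_matching 15 6) = 13"
proof -
  let ?G = "complete_minus_matching 15 6"
  let ?V = "verts ?G" and ?E = "edges ?G"
  have c: "card {2..<15::nat} = 13" by simp
  have "vertex_connectivity ?G = card {2..<15::nat}"
  proof (rule vc_eq)
    show "finite ?V" by (simp add: M_verts)
    show "{2..<15} \<subseteq> ?V" by (auto simp: M_verts)
    have W: "?V - {2..<15} = {0,1}" by (auto simp: M_verts)
    have "\<not> (\<lambda>x y. x \<in> {0,1} \<and> y \<in> {0,1} \<and> {x, y} \<in> ?E)\<^sup>*\<^sup>* 0 (1::nat)"
      by (rule not_reach) (auto simp: edgeM okM_def)
    then have "\<not> connected_on {0,1} ?E" unfolding connected_on_def by blast
    then show "\<not> connected_on (?V - {2..<15}) ?E \<or> card (?V - {2..<15}) \<le> 1" using W by simp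
  next
    fix S assume S: "S \<subseteq> ?V" "card S < card {2..<15::nat}"
    let ?W = "?V - S"
    have "card ?W = 15 - card S" using S(1) card_W by (simp add: M_verts)
    then have cw: "3 \<le> card ?W" using S(2) c by linarith
    have "connected_on ?W ?E"
    proof (rule conn_intro)
      fix u v assume uv: "u \<in> ?W" "v \<in> ?W" "u \<noteq> v"
      let ?R = "\<lambda>x y. x \<in> ?W \<and> y \<in> ?W \<and> {x, y} \<in> ?E"
      show "?R\<^sup>*\<^sup>* u v"
      proof (cases "{u,v} \<in> ?E")
        case True then show ?thesis using uv by (intro r_into_rtranclp) simp
      next
        case False
        have ul: "u < 15" "v < 15" using uv by (auto simp: M_verts)
        then have m: "u < 12 \<and> v < 12 \<and> u div 2 = v div 2" using False uv(3) by (simp add: edgeM okM_def)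
        have "card {u,v} = 2" using uv(3) by simp
        have "\<not> ?W \<subseteq> {u,v}"
        proof
          assume "?W \<subseteq> {u,v}"
          then have "card ?W \<le> card {u,v}" by (rule card_mono[rotated]) simp
          then show False using cw \<open>card {u,v} = 2\<close> by simp
        qed
        then obtain w where w: "w \<in> ?W" "w \<noteq> u" "w \<noteq> v" by blast
        have wl: "w < 15" using w by (auto simp: M_verts)
        have nw: "\<not> (w div 2 = u div 2)"
        proof
          assume "w div 2 = u div 2"
          then show False using three_div2[of w u v] m w(2,3) uv(3) by simp
        qed
        have "?R u w" using uv w ul wl nw m by (auto simp: edgeM okM_def)
        moreover have "?R w v" using uv w ul wl nw m by (auto simp: edgeM okM_def)
        ultimately show ?thesis by (rule path2)
      qed
    qed
    then show "connected_on ?W ?E \<and> \<not> card ?W \<le> 1" using cw by simp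
  qed
  then show ?thesis using c by simp
qed

lemma C_arith1_all:
  "\<forall>u\<in>set [0..<12]. \<forall>w\<in>set [0..<12]. w \<noteq> (u + 11) mod 12 \<longrightarrow> w \<noteq> u \<longrightarrow> w \<noteq> Suc u mod 12 \<longrightarrow> w \<noteq> (u + 2) mod 12
     \<longrightarrow> okC u w \<and> okC w (Suc u mod 12)"
  unfolding okC_def by code_simp

lemma C_arith2_all:
  "\<forall>u\<in>set [0..<12]. okC u ((u + 2) mod 12) \<and> okC ((u + 2) mod 12) ((u + 11) mod 12) \<and> okC ((u + 11) mod 12) (Suc u mod 12)"
  unfolding okC_def by code_simp

lemma C_arith1:
  assumes "u < 12" "w < 12" "w \<noteq> (u + 11) mod 12" "w \<noteq> u" "w \<noteq> Suc u mod 12" "w \<noteq> (u + 2) mod 12"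
  shows "okC u w \<and> okC w (Suc u mod 12)"
proof -
  have "u \<in> set [0..<12]" "w \<in> set [0..<12]" using assms by auto
  then show ?thesis using C_arith1_all assms by blast
qed

lemma C_arith2:
  assumes "u < (12::nat)"
  shows "okC u ((u + 2) mod 12) \<and> okC ((u + 2) mod 12) ((u + 11) mod 12) \<and> okC ((u + 11) mod 12) (Suc u mod 12)"
proof -
  have "u \<in> set [0..<12]" using assms by auto
  then show ?thesis using C_arith2_all by blast
qed

lemma vcC: "vertex_connectivity (complete_minus_ham_cycle 12) = 9"
proof -
  let ?G = "complete_minus_ham_cycle 12"
  let ?V = "verts ?G" and ?E = "edges ?G"
  have c: "card {2..<11::nat} = 9" by simp
  have "vertex_connectivity ?G = card {2..<11::nat}"
  proof (rule vc_eq)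
    show "finite ?V" by (simp add: C_verts)
    show "{2..<11} \<subseteq> ?V" by (auto simp: C_verts)
    have W: "?V - {2..<11} = {0,1,11}" by (auto simp: C_verts)
    have "\<not> (\<lambda>x y. x \<in> {0,1,11} \<and> y \<in> {0,1,11} \<and> {x, y} \<in> ?E)\<^sup>*\<^sup>* 0 (1::nat)"
      by (rule not_reach) (auto simp: edgeC okC_def)
    then have "\<not> connected_on {0,1,11} ?E" unfolding connected_on_def by blast
    then show "\<not> connected_on (?V - {2..<11}) ?E \<or> card (?V - {2..<11}) \<le> 1" using W by simp
  next
    fix S assume S: "S \<subseteq> ?V" "card S < card {2..<11::nat}"
    let ?W = "?V - S"
    let ?R = "\<lambda>x y. x \<in> ?W \<and> y \<in> ?W \<and> {x, y} \<in> ?E"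
    have "card ?W = 12 - card S" using S(1) card_W by (simp add: C_verts)
    then have cw: "4 \<le> card ?W" using S(2) c by linarith
    have finW: "finite ?W" by (simp add: C_verts)
    have key: "?R\<^sup>*\<^sup>* u (Suc u mod 12)" if uW: "u \<in> ?W" and vW: "Suc u mod 12 \<in> ?W" for u
    proof -
      have u: "u < 12" using uW by (auto simp: C_verts)
      let ?a = "(u + 11) mod 12" and ?b = "(u + 2) mod 12" and ?v = "Suc u mod 12"
      show ?thesis
      proof (cases "?W \<subseteq> {?a, u, ?v, ?b}")
        case False
        then obtain w where w: "w \<in> ?W" "w \<notin> {?a, u, ?v, ?b}" by blast
        have wl: "w < 12" using w by (auto simp: C_verts)
        have ok: "okC u w \<and> okC w ?v" using C_arith1[OF u wl] w(2) by simp
        have "?R u w" using ok uW w(1) u wl by (simp add: edgeC)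
        moreover have "?R w ?v" using ok vW w(1) wl by (simp add: edgeC)
        ultimately show ?thesis by (rule path2)
      next
        case True
        have "card {?a, u, ?v, ?b} \<le> 4" using card_length[of "[?a, u, ?v, ?b]"] by simp
        then have "card {?a, u, ?v, ?b} \<le> card ?W" using cw by linarith
        then have "?W = {?a, u, ?v, ?b}" using card_seteq[OF _ True] by simp
        then have ab: "?a \<in> ?W" "?b \<in> ?W" by auto
        have ok: "okC u ?b \<and> okC ?b ?a \<and> okC ?a ?v" using C_arith2[OF u] by simp
        have "?R u ?b" using ok uW ab u by (simp add: edgeC)
        moreover have "?R ?b ?a" using ok ab by (simp add: edgeC)
        moreover have "?R ?a ?v" using ok ab vW by (simp add: edgeC)
        ultimately show ?thesis by (rule path3)
      qed
    qed
    have "connected_on ?W ?E"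
    proof (rule conn_intro)
      fix u v assume uv: "u \<in> ?W" "v \<in> ?W" "u \<noteq> v"
      have ul: "u < 12" "v < 12" using uv by (auto simp: C_verts)
      show "?R\<^sup>*\<^sup>* u v"
      proof (cases "{u,v} \<in> ?E")
        case True then show ?thesis using uv by (intro r_into_rtranclp) simp
      next
        case False
        then have "v = Suc u mod 12 \<or> u = Suc v mod 12" using ul uv(3) by (simp add: edgeC okC_def)
        then show ?thesis
        proof
          assume "v = Suc u mod 12" then show ?thesis using key uv by simp
        next
          assume h: "u = Suc v mod 12"
          have "?R\<^sup>*\<^sup>* v u" using key[of v] uv h by simp
          then show ?thesis by (rule rtranclp_sym[rotated]) (auto simp: insert_commute)
        qed
      qed
    qed
    then show "connected_on ?W ?E \<and> \<not> card ?W \<le> 1" using cw by simp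
  qed
  then show ?thesis using c by simp
qed
definition rotK10 :: "nat list list" where "rotK10 = [[1, 5, 9, 6, 3, 7, 4, 8, 2], [0, 2, 4, 5, 3, 6, 8, 9, 7], [0, 8, 7, 3, 9, 5, 6, 4, 1], [0, 1, 5, 8, 4, 6, 9, 2, 7], [0, 7, 9, 5, 1, 2, 6, 3, 8], [0, 7, 6, 2, 9, 8, 3, 1, 4], [0, 9, 3, 4, 2, 5, 7, 8, 1], [0, 3, 2, 8, 6, 5, 1, 9, 4], [0, 4, 3, 5, 9, 1, 6, 7, 2], [0, 4, 7, 1, 8, 5, 2, 3, 6]]"

definition fsK10 :: "(nat \<times> nat) list list" where "fsK10 = [[(0,1), (1,2), (2,0)], [(0,5), (5,7), (7,1), (1,0)], [(0,9), (9,4), (4,5), (5,0)], [(0,6), (6,9), (9,0)], [(0,3), (3,1), (1,6), (6,0)], [(0,7), (7,3), (3,0)], [(0,4), (4,7), (7,0)], [(0,8), (8,4), (4,0)], [(0,2), (2,8), (8,0)], [(1,4), (4,2), (2,1)], [(1,5), (5,4), (4,1)], [(1,3), (3,5), (5,1)], [(1,8), (8,6), (6,1)], [(1,9), (9,8), (8,1)], [(1,7), (7,9), (9,1)], [(2,7), (7,8), (8,2)], [(2,3), (3,7), (7,2)], [(2,9), (9,3), (3,2)], [(2,5), (5,9), (9,2)], [(2,6), (6,5), (5,2)], [(2,4), (4,6), (6,2)], [(3,8), (8,5), (5,3)], [(3,4), (4,8), (8,3)], [(3,6), (6,4), (4,3)], [(3,9), (9,6), (6,3)], [(4,9), (9,7),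 (7,4)], [(5,6), (6,7), (7,5)], [(5,8), (8,9), (9,5)], [(6,8), (8,7), (7,6)]]"

definition TK10 :: "nat list list" where "TK10 = [[0, 0, 27, 14, 21, 3, 11, 18, 24, 7], [6, 0, 1, 36, 30, 33, 16, 45, 39, 42], [2, 32, 0, 51, 63, 57, 60, 48, 28, 54], [20, 15, 56, 0, 69, 37, 72, 52, 66, 75], [26, 35, 31, 74, 0, 9, 64, 22, 70, 78], [10, 38, 62, 68, 34, 0, 81, 4, 84, 58], [17, 41, 65, 77, 73, 61, 0, 82, 87, 12], [23, 5, 53, 19, 80, 83, 89, 0, 49, 46], [29, 44, 50, 71, 25, 67, 40, 88, 0, 85], [13, 47, 59, 55, 8, 86, 76, 79, 43, 0]]"

lemma chkK10: "check 10 okK rotK10 fsK10 TK10" by code_simp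

lemma lenK10: "length (concat fsK10) = 90" "length fsK10 = 29" by code_simp+

lemma genusK10: "orientable_genus (complete_graph 10) = 4"
  by (rule genus_from_check[OF chkK10 darts_K complete_fin complete_dbl]) (simp_all add: verts_complete lenK10)

definition rotC12 :: "nat list list" where "rotC12 = [[2, 9, 4, 8, 3, 6, 10, 5, 7], [3, 10, 7, 9, 5, 8, 4, 6, 11], [0, 7, 4, 11, 5, 10, 8, 6, 9], [0, 8, 10, 1, 11, 7, 5, 9, 6], [0, 9, 11, 2, 7, 10, 6, 1, 8], [0, 10, 2, 11, 8, 1, 9, 3, 7], [0, 3, 9, 2, 8, 11, 1, 4, 10], [0, 5, 3, 11, 9, 1, 10, 4, 2], [0, 4, 1, 5, 11, 6, 2, 10, 3], [0, 2, 6, 3, 5, 1, 7, 11, 4], [0, 6, 4, 7, 1, 3, 8, 2, 5], [1, 6, 8, 5, 2, 4, 9, 7, 3]]"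

definition fsC12 :: "(nat \<times> nat) list list" where "fsC12 = [[(0,2), (2,7), (7,0)], [(0,9), (9,2), (2,0)], [(0,4), (4,9), (9,0)], [(0,8), (8,4), (4,0)], [(0,3), (3,8), (8,0)], [(0,6), (6,3), (3,0)], [(0,10), (10,6), (6,0)], [(0,5), (5,10), (10,0)], [(0,7), (7,5), (5,0)], [(1,3), (3,11), (11,1)], [(1,10), (10,3), (3,1)], [(1,7), (7,10), (10,1)], [(1,9), (9,7), (7,1)], [(1,5), (5,9), (9,1)], [(1,8), (8,5), (5,1)], [(1,4), (4,8), (8,1)], [(1,6), (6,4), (4,1)], [(1,11), (11,6), (6,1)], [(2,4), (4,7), (7,2)], [(2,11), (11,4), (4,2)], [(2,5), (5,11), (11,2)], [(2,10), (10,5), (5,2)], [(2,8), (8,10), (10,2)], [(2,6), (6,8), (8,2)], [(2,9), (9,6), (6,2)], [(3,10), (10,8), (8,3)], [(3,7), (7,11), (11,3)], [(3,5), (5,7), (7,3)], [(3,9), (9,5), (5,3)], [(3,6), (6,9), (9,3)], [(4,11), (11,9), (9,4)], [(4,10), (10,7), (7,4)], [(4,6), (6,10), (10,4)], [(5,8), (8,11), (11,5)], [(6,11), (11,8), (8,6)], [(7,9), (9,11), (11,7)]]"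

definition TC12 :: "nat list list" where "TC12 = [[0, 0, 0, 12, 6, 21, 15, 24, 9, 3, 18, 0], [0, 0, 0, 27, 45, 39, 48, 33, 42, 36, 30, 51], [5, 0, 0, 0, 54, 60, 69, 1, 66, 72, 63, 57], [17, 32, 0, 0, 0, 81, 87, 78, 13, 84, 75, 28], [11, 50, 59, 0, 0, 0, 96, 55, 46, 7, 93, 90], [26, 44, 65, 86, 0, 0, 0, 82, 99, 40, 22, 61], [20, 53, 74, 16, 49, 0, 0, 0, 70, 88, 97, 102], [2, 38, 56, 83, 95, 25, 0, 0, 0, 105, 34, 79], [14, 47, 71, 77, 10, 43, 104, 0, 0, 0, 67, 100], [8, 41, 4, 89, 92, 85, 73, 37, 0, 0, 0, 106], [23, 35, 68, 31, 98, 64, 19, 94, 76, 0, 0, 0], [0, 29, 62, 80, 58, 101, 52, 107, 103, 91, 0, 0]]"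

lemma chkC12: "check 12 okC rotC12 fsC12 TC12" by code_simp

lemma lenC12: "length (concat fsC12) = 108" "length fsC12 = 36" by code_simp+

lemma genusC12: "orientable_genus (complete_minus_ham_cycle 12) = 4"
  by (rule genus_from_check[OF chkC12 darts_C C_fin C_dbl]) (simp_all add: C_verts lenC12)

definition rotK14 :: "nat list list" where "rotK14 = [[2, 1, 12, 10, 3, 13, 4, 8, 7, 9, 6, 11, 5], [2, 13, 9, 11, 8, 6, 12, 0, 3, 10, 5, 7, 4], [3, 0, 5, 9, 12, 11, 6, 10, 7, 8, 13, 1, 4], [0, 10, 1, 2, 5, 6, 9, 4, 12, 8, 11, 7, 13], [0, 13, 6, 5, 2, 1, 7, 11, 12, 3, 9, 10, 8], [0, 11, 13, 8, 12, 6, 3, 4, 7, 1, 10, 9, 2], [0, 9, 3, 5, 12, 1, 8, 7, 4, 13, 10, 2, 11], [0, 8, 2, 10, 12, 13, 3, 11, 4, 1, 5, 6, 9], [0, 4, 10, 9, 6, 1, 11, 3, 12, 5, 13, 2, 7], [0, 7, 8, 11, 1, 13, 12, 2, 5, 10, 4, 3, 6], [0, 12, 7, 2, 6, 13, 11, 8, 4, 9, 5, 1, 3], [0, 6, 2, 12, 4, 7, 3, 8, 1, 9, 10, 13, 5], [0, 1, 6, 5, 8, 3, 4, 11, 2, 9, 13, 7, 10], [0, 3, 7, 12, 9, 1, 2, 8, 5, 11, 10, 6, 4]]"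

definition fsK14 :: "(nat \<times> nat) list list" where "fsK14 = [[(0,2), (2,5), (5,0)], [(0,1), (1,3), (3,2), (2,0)], [(0,12), (12,1), (1,0)], [(0,10), (10,12), (12,0)], [(0,3), (3,10), (10,0)], [(0,13), (13,3), (3,0)], [(0,4), (4,13), (13,0)], [(0,8), (8,4), (4,0)], [(0,7), (7,8), (8,0)], [(0,9), (9,7), (7,0)], [(0,6), (6,9), (9,0)], [(0,11), (11,6), (6,0)], [(0,5), (5,11), (11,0)], [(1,2), (2,4), (4,1)], [(1,13), (13,2), (2,1)], [(1,9), (9,13), (13,1)], [(1,11), (11,9), (9,1)], [(1,8), (8,11), (11,1)], [(1,6), (6,8), (8,1)], [(1,12), (12,6), (6,1)], [(1,10), (10,3), (3,1)], [(1,5), (5,10), (10,1)], [(1,7), (7,5), (5,1)], [(1,4), (4,7), (7,1)], [(2,3), (3,5), (5,4), (4,2)], [(2,9), (9,5), (5,2)], [(2,12), (12,9), (9,2)], [(2,11), (11,12), (12,2)], [(2,6), (6,11), (11,2)], [(2,10), (10,6), (6,2)], [(2,7), (7,10), (10,2)], [(2,8), (8,7), (7,2)], [(2,13), (13,8), (8,2)], [(3,6), (6,5), (5,3)], [(3,9), (9,6), (6,3)], [(3,4), (4,9), (9,3)], [(3,12), (12,4), (4,3)], [(3,8), (8,12), (12,3)], [(3,11), (11,8), (8,3)], [(3,7), (7,11), (11,3)], [(3,13), (13,7), (7,3)], [(4,6), (6,13), (13,4)], [(4,5), (5,7), (7,6), (6,4)], [(4,11), (11,7), (7,4)], [(4,12),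 (12,11), (11,4)], [(4,10), (10,9), (9,4)], [(4,8), (8,10), (10,4)], [(5,13), (13,11), (11,5)], [(5,8), (8,13), (13,5)], [(5,12), (12,8), (8,5)], [(5,6), (6,12), (12,5)], [(5,9), (9,10), (10,5)], [(6,7), (7,9), (9,8), (8,6)], [(6,10), (10,13), (13,6)], [(7,12), (12,10), (10,7)], [(7,13), (13,12), (12,7)], [(8,9), (9,11), (11,10), (10,8)], [(9,12), (12,13), (13,9)], [(10,11), (11,13), (13,10)]]"

definition TK14 :: "nat list list" where "TK14 = [[0, 3, 0, 13, 19, 37, 31, 25, 22, 28, 10, 34, 7, 16], [9, 0, 40, 4, 70, 64, 55, 67, 52, 46, 61, 49, 58, 43], [6, 45, 0, 73, 41, 1, 86, 92, 95, 77, 89, 83, 80, 98], [18, 63, 5, 0, 107, 74, 101, 119, 113, 104, 14, 116, 110, 122], [24, 42, 76, 112, 0, 128, 125, 71, 141, 108, 138, 132, 135, 20], [2, 69, 79, 103, 75, 0, 153, 129, 147, 156, 65, 38, 150, 144], [36, 60, 91, 106, 131, 102, 0, 159, 56, 32, 163, 87, 154, 126], [30, 72, 97, 124, 134, 68, 130, 0, 26, 160, 93, 120, 166, 169], [27, 57, 100, 118, 23, 152, 162, 96, 0, 172, 142, 53, 114, 148], [33, 51, 82, 109, 140, 78, 105, 29, 161, 0, 157, 173, 176, 47], [15, 66, 94, 62, 143, 158, 90, 168, 175, 139, 0, 179, 11, 164], [39, 54, 88, 121, 137, 146, 35, 133, 117, 50, 174, 0, 84, 180], [12, 8, 85, 115,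 111, 155, 59, 171, 151, 81, 167, 136, 0, 177], [21, 48, 44, 17, 127, 149, 165, 123, 99, 178, 181, 145, 170, 0]]"

lemma chkK14: "check 14 okK rotK14 fsK14 TK14" by code_simp

lemma lenK14: "length (concat fsK14) = 182" "length fsK14 = 59" by code_simp+

lemma genusK14: "orientable_genus (complete_graph 14) = 10"
  by (rule genus_from_check[OF chkK14 darts_K complete_fin complete_dbl]) (simp_all add: verts_complete lenK14)

definition rotM15 :: "nat list list" where "rotM15 = [[2, 12, 3, 6, 5, 14, 8, 4, 9, 10, 13, 7, 11], [2, 4, 3, 12, 8, 10, 6, 11, 5, 9, 7, 14, 13], [0, 11, 8, 6, 10, 5, 7, 4, 1, 13, 9, 14, 12], [0, 12, 1, 4, 10, 9, 13, 5, 11, 7, 8, 14, 6], [0, 8, 11, 12, 13, 6, 14, 10, 3, 1, 2, 7, 9], [0, 6, 9, 1, 11, 3, 13, 8, 7, 2, 10, 12, 14], [0, 3, 14, 4, 13, 11, 1, 10, 2, 8, 12, 9, 5], [0, 13, 12, 10, 14, 1, 9, 4, 2, 5, 8, 3, 11], [0, 14, 3, 7, 5, 13, 10, 1, 12, 6, 2, 11, 4], [0, 4, 7, 1, 5, 6, 12, 11, 14, 2, 13, 3, 10], [0, 9, 3, 4, 14, 7, 12, 5, 2, 6, 1, 8, 13], [0, 7, 3, 5, 1, 6, 13, 14, 9, 12, 4, 8, 2], [0, 2, 14, 5, 10, 7, 13, 4, 11, 9, 6, 8, 1, 3], [0, 10, 8, 5, 3, 9, 2, 1, 14, 11, 6,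 4, 12, 7], [0, 5, 12, 2, 9, 11, 13, 1, 7, 10, 4, 6, 3, 8]]"

definition fsM15 :: "(nat \<times> nat) list list" where "fsM15 = [[(0,2), (2,11), (11,0)], [(0,12), (12,2), (2,0)], [(0,3), (3,12), (12,0)], [(0,6), (6,3), (3,0)], [(0,5), (5,6), (6,0)], [(0,14), (14,5), (5,0)], [(0,8), (8,14), (14,0)], [(0,4), (4,8), (8,0)], [(0,9), (9,4), (4,0)], [(0,10), (10,9), (9,0)], [(0,13), (13,10), (10,0)], [(0,7), (7,13), (13,0)], [(0,11), (11,7), (7,0)], [(1,2), (2,13), (13,1)], [(1,4), (4,2), (2,1)], [(1,3), (3,4), (4,1)], [(1,12), (12,3), (3,1)], [(1,8), (8,12), (12,1)], [(1,10), (10,8), (8,1)], [(1,6), (6,10), (10,1)], [(1,11), (11,6), (6,1)], [(1,5), (5,11), (11,1)], [(1,9), (9,5), (5,1)], [(1,7), (7,9), (9,1)], [(1,14), (14,7), (7,1)], [(1,13), (13,14), (14,1)], [(2,8), (8,11), (11,2)], [(2,6), (6,8), (8,2)], [(2,10), (10,6), (6,2)], [(2,5), (5,10), (10,2)], [(2,7), (7,5), (5,2)], [(2,4), (4,7), (7,2)], [(2,9), (9,13), (13,2)], [(2,14), (14,9), (9,2)], [(2,12), (12,14), (14,2)], [(3,10), (10,4), (4,3)], [(3,9), (9,10), (10,3)], [(3,13), (13,9), (9,3)], [(3,5), (5,13), (13,3)], [(3,11), (11,5), (5,3)], [(3,7), (7,11), (11,3)], [(3,8), (8,7), (7,3)],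 [(3,14), (14,8), (8,3)], [(3,6), (6,14), (14,3)], [(4,11), (11,8), (8,4)], [(4,12), (12,11), (11,4)], [(4,13), (13,12), (12,4)], [(4,6), (6,13), (13,4)], [(4,14), (14,6), (6,4)], [(4,10), (10,14), (14,4)], [(4,9), (9,7), (7,4)], [(5,9), (9,6), (6,5)], [(5,8), (8,13), (13,5)], [(5,7), (7,8), (8,5)], [(5,12), (12,10), (10,5)], [(5,14), (14,12), (12,5)], [(6,11), (11,13), (13,6)], [(6,12), (12,8), (8,6)], [(6,9), (9,12), (12,6)], [(7,12), (12,13), (13,7)], [(7,10), (10,12), (12,7)], [(7,14), (14,10), (10,7)], [(8,10), (10,13), (13,8)], [(9,11), (11,12), (12,9)], [(9,14), (14,11), (11,9)], [(11,14), (14,13), (13,11)]]"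

definition TM15 :: "nat list list" where "TM15 = [[0, 0, 0, 6, 21, 12, 9, 33, 18, 24, 27, 36, 3, 30, 15], [0, 0, 39, 45, 42, 63, 57, 69, 51, 66, 54, 60, 48, 75, 72], [5, 44, 0, 0, 93, 87, 81, 90, 78, 96, 84, 1, 102, 40, 99], [11, 50, 0, 0, 46, 114, 129, 120, 123, 108, 105, 117, 7, 111, 126], [26, 47, 43, 107, 0, 0, 141, 94, 22, 150, 147, 132, 135, 138, 144], [17, 68, 92, 119, 0, 0, 13, 159, 156, 153, 88, 64, 162, 115, 165], [14, 62, 86, 10, 146, 155, 0, 0, 82, 174, 58, 168, 171, 142, 130], [38, 74, 95, 125, 152, 91, 0, 0, 160, 70, 180, 121, 177, 34, 183], [23, 56, 83, 128, 134, 161, 173, 124, 0, 0, 186, 79, 52, 157, 19], [29, 71, 101, 113, 25, 67, 154, 151, 0, 0, 109, 189, 175, 97, 192], [32, 59, 89, 110, 106, 164, 85, 185, 55, 28, 0, 0, 181, 187, 148], [2, 65, 80, 122, 137, 118, 61, 37, 133, 194, 0, 0, 190, 169, 195], [8, 53, 4, 49, 140, 167, 176, 182, 172, 191, 163, 136, 0, 178, 103], [35, 41, 98, 116, 143, 158, 170, 179, 188, 112, 31, 197, 139, 0, 76], [20, 77, 104, 131, 149, 16, 145, 73, 127, 100, 184, 193, 166, 196, 0]]"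

lemma chkM15: "check 15 okM rotM15 fsM15 TM15" by code_simp

lemma lenM15: "length (concat fsM15) = 198" "length fsM15 = 66" by code_simp+

lemma genusM15: "orientable_genus (complete_minus_matching 15 6) = 10"
  by (rule genus_from_check[OF chkM15 darts_M M_fin M_dbl]) (simp_all add: M_verts lenM15)

theorem mainTheorem4:
  shows "vertex_connectivity (complete_graph 10) = 9 \<and> orientable_genus (complete_graph 10) = 4 \<and>
         vertex_connectivity (complete_minus_ham_cycle 12) = 9 \<and>
         orientable_genus (complete_minus_ham_cycle 12) = 4 \<and>
         vertex_connectivity (complete_graph 14) = 13 \<and> orientable_genus (complete_graph 14) = 10 \<and>
         vertex_connectivity (complete_minus_matching 15 6) = 13 \<and>
         orientable_genus (complete_minus_matching 15 6) = 10 \<and>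
         \<not> graph_iso (complete_graph 10) (complete_minus_ham_cycle 12) \<and>
         \<not> graph_iso (complete_graph 14) (complete_minus_matching 15 6)"
proof -
  have i1: "\<not> graph_iso (complete_graph 10) (complete_minus_ham_cycle 12)"
    by (rule not_iso) (simp add: verts_complete C_verts)
  have i2: "\<not> graph_iso (complete_graph 14) (complete_minus_matching 15 6)"
    by (rule not_iso) (simp add: verts_complete M_verts)
  have k10: "vertex_connectivity (complete_graph 10) = 9" using vcK[of 10] by simp
  have k14: "vertex_connectivity (complete_graph 14) = 13" using vcK[of 14] by simp
  show ?thesis using i1 i2 k10 k14 vcC vcM genusK10 genusC12 genusK14 genusM15 by simp
qed

end
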